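(* Let $k$ be a positive integer and $I \subseteq \{1,\dots,k\}$. Let $G$ be a $(26k+24|I|)$-connected graph and let $S = \{\{s_1,t_1\},\dots,\{s_k,t_k\}\}$ where $s_1,\dots,s_k,t_1,\dots,t_k$ are $2k$ distinct vertices of $G$. Then some nice partition of $G$ has a parity breaking matching for $(S,I)$ if and only if every nice partition of $G$ has a parity breaking matching for $(S,I)$.
   Context: All graphs are finite and simple. A partition $(A,B)$ of $G$ is a partition of $V(G)$ into two sets $A,B$. For such a partition, $G_{A,B}$ denotes the graph $G[A] \cup G[B]$, i.e. the graph whose edges are the edges of $G$ with both ends in $A$ or both ends in $B$. An odd cycle cover of $G$ is a set $X \subseteq V(G)$ such that $G - X$ is bipartite; it is minimum if it has the smallest possible size. A partition $(A,B)$ of $G$ is nice if there is a minimum odd cycle cover $X$ of $G$ such that $A \setminus X$ and $B \setminus X$ are both independent sets of $G$, every vertex of $X$ having more neighbours in $B\setminus X$ than in $A \setminus X$ lies in $A$, and every vertex of $X$ having more neighbours in $A\setminus X$ than in $B\setminus X$ lies in $B$. For $S = \{\{s_1,t_1\},\dots,\{s_k,t_k\}\}$ and $I \subseteq \{1,\dots,k\}$, a parity breaking matching for $(S,I)$ with respect to a partition $(A,B)$ is a matching $M = \{m_i\}_{i \in I}$ of $G$ (indexed by $I$) with $M \subseteq E(G_{A,B})$ such that $m_i \cap \{s_j,t_j\} = \emptyset$ for all $i \in I$ and all $j \in \{1,\dots,k\}$ with $j \neq i$. *)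

theory Defs
  imports Main
begin

definition graph :: "'a set \<Rightarrow> 'a set set \<Rightarrow> bool" where
  "graph V E \<longleftrightarrow> finite V \<and> (\<forall>e\<in>E. e \<subseteq> V \<and> card e = 2)"

definition adj :: "'a set set \<Rightarrow> 'a \<Rightarrow> 'a \<Rightarrow> bool" where
  "adj E u v \<longleftrightarrow> {u, v} \<in> E"

text \<open>The subgraph induced on W is connected (the empty graph counts as connected here;
  irrelevant below since k-connectivity requires more than k vertices).\<close>
definition connected_on :: "'a set set \<Rightarrow> 'a set \<Rightarrow> bool" where
  "connected_on E W \<longleftrightarrow>
     (\<forall>u\<in>W. \<forall>v\<in>W. (u, v) \<in> {(x, y). x \<in> W \<and> y \<in> W \<and> adj E x y}\<^sup>*)"

definition k_connected :: "'a set \<Rightarrow> 'a set set \<Rightarrow> nat \<Rightarrow> bool" where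
  "k_connected V E n \<longleftrightarrow> card V > n \<and>
     (\<forall>X. X \<subseteq> V \<and> card X < n \<longrightarrow> connected_on E (V - X))"

definition independent :: "'a set set \<Rightarrow> 'a set \<Rightarrow> bool" where
  "independent E W \<longleftrightarrow> (\<forall>u\<in>W. \<forall>v\<in>W. \<not> adj E u v)"

definition bipartite_on :: "'a set set \<Rightarrow> 'a set \<Rightarrow> bool" where
  "bipartite_on E W \<longleftrightarrow> (\<exists>P Q. P \<union> Q = W \<and> P \<inter> Q = {} \<and> independent E P \<and> independent E Q)"

definition odd_cycle_cover :: "'a set \<Rightarrow> 'a set set \<Rightarrow> 'a set \<Rightarrow> bool" where
  "odd_cycle_cover V E X \<longleftrightarrow> X \<subseteq> V \<and> bipartite_on E (V - X)"

definition min_odd_cycle_cover :: "'a set \<Rightarrow> 'a set set \<Rightarrow> 'a set \<Rightarrow> bool" where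
  "min_odd_cycle_cover V E X \<longleftrightarrow> odd_cycle_cover V E X \<and>
     (\<forall>Y. odd_cycle_cover V E Y \<longrightarrow> card X \<le> card Y)"

definition nbrs :: "'a set set \<Rightarrow> 'a \<Rightarrow> 'a set" where
  "nbrs E v = {u. adj E v u}"

definition partition2 :: "'a set \<Rightarrow> 'a set \<Rightarrow> 'a set \<Rightarrow> bool" where
  "partition2 V A B \<longleftrightarrow> A \<union> B = V \<and> A \<inter> B = {}"

definition nice_partition :: "'a set \<Rightarrow> 'a set set \<Rightarrow> 'a set \<Rightarrow> 'a set \<Rightarrow> bool" where
  "nice_partition V E A B \<longleftrightarrow> partition2 V A B \<and>
     (\<exists>X. min_odd_cycle_cover V E X \<and>
          independent E (A - X) \<and> independent E (B - X) \<and>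
          (\<forall>v\<in>X. card (nbrs E v \<inter> (B - X)) > card (nbrs E v \<inter> (A - X)) \<longrightarrow> v \<in> A) \<and>
          (\<forall>v\<in>X. card (nbrs E v \<inter> (A - X)) > card (nbrs E v \<inter> (B - X)) \<longrightarrow> v \<in> B))"

definition parity_breaking_matching ::
  "'a set set \<Rightarrow> nat \<Rightarrow> (nat \<Rightarrow> 'a) \<Rightarrow> (nat \<Rightarrow> 'a) \<Rightarrow> nat set \<Rightarrow> 'a set \<Rightarrow> 'a set \<Rightarrow> (nat \<Rightarrow> 'a set) \<Rightarrow> bool" where
  "parity_breaking_matching E k s t I A B m \<longleftrightarrow>
     (\<forall>i\<in>I. m i \<in> E \<and> (m i \<subseteq> A \<or> m i \<subseteq> B)) \<and>
     (\<forall>i\<in>I. \<forall>j\<in>I. i \<noteq> j \<longrightarrow> m i \<inter> m j = {}) \<and>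
     (\<forall>i\<in>I. \<forall>j\<in>{1..k}. j \<noteq> i \<longrightarrow> m i \<inter> {s j, t j} = {})"

definition has_pbm :: "'a set set \<Rightarrow> nat \<Rightarrow> (nat \<Rightarrow> 'a) \<Rightarrow> (nat \<Rightarrow> 'a) \<Rightarrow> nat set \<Rightarrow> 'a set \<Rightarrow> 'a set \<Rightarrow> bool" where
  "has_pbm E k s t I A B \<longleftrightarrow> (\<exists>m. parity_breaking_matching E k s t I A B m)"

end

theory Submission
  imports Defs
begin


definition nice_with where
"nice_with V E A B X \<longleftrightarrow> partition2 V A B \<and> min_odd_cycle_cover V E X \<and>
   independent E (A - X) \<and> independent E (B - X) \<and>
   (\<forall>v\<in>X. card (nbrs E v \<inter> (B - X)) > card (nbrs E v \<inter> (A - X)) \<longrightarrow> v \<in> A) \<and>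
   (\<forall>v\<in>X. card (nbrs E v \<inter> (A - X)) > card (nbrs E v \<inter> (B - X)) \<longrightarrow> v \<in> B)"

lemma nice_iff: "nice_partition V E A B \<longleftrightarrow> (\<exists>X. nice_with V E A B X)"
  unfolding nice_partition_def nice_with_def by blast

lemma nice_with_swap: "nice_with V E A B X \<Longrightarrow> nice_with V E B A X"
  unfolding nice_with_def partition2_def by blast

lemma pbm_swap: "has_pbm E k s t I A B \<Longrightarrow> has_pbm E k s t I B A"
proof -
  assume "has_pbm E k s t I A B"
  then obtain m where m: "parity_breaking_matching E k s t I A B m" unfolding has_pbm_def by blast
  have "parity_breaking_matching E k s t I B A m"
    using m unfolding parity_breaking_matching_def by auto
  then show ?thesis unfolding has_pbm_def by blast
qed

lemma adj_props:
  assumes "graph V E" "adj E u v"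
  shows "u \<in> V" "v \<in> V" "u \<noteq> v" "{u,v} \<in> E"
proof -
  have e: "{u,v} \<in> E" using assms(2) unfolding adj_def by simp
  then have "{u,v} \<subseteq> V" "card {u,v} = 2" using assms(1) unfolding graph_def by auto
  then show "u \<in> V" "v \<in> V" "u \<noteq> v" "{u,v} \<in> E" using e by auto
qed

lemma nbrs_fin: assumes "graph V E" shows "nbrs E v \<subseteq> V" "finite (nbrs E v)"
proof -
  show "nbrs E v \<subseteq> V" unfolding nbrs_def using adj_props[OF assms] by blast
  then show "finite (nbrs E v)" using assms unfolding graph_def using finite_subset by blast
qed

lemma edge_props: assumes "graph V E" "e \<in> E" shows "card e = 2" "e \<subseteq> V" "finite e"
  using assms unfolding graph_def by (auto intro: card_ge_0_finite)

lemma min_degree: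
  assumes g: "graph V E" and kc: "k_connected V E n" and v: "v \<in> V"
  shows "card (nbrs E v) \<ge> n"
proof (rule ccontr)
  assume "\<not> n \<le> card (nbrs E v)"
  hence lt: "card (nbrs E v) < n" by simp
  let ?N = "nbrs E v"
  have NV: "?N \<subseteq> V" "finite ?N" using nbrs_fin[OF g] by auto
  have fV: "finite V" using g unfolding graph_def by simp
  have con: "connected_on E (V - ?N)" using kc lt NV unfolding k_connected_def by blast
  have vN: "v \<notin> ?N" unfolding nbrs_def using adj_props(3)[OF g] by blast
  have "card V > n" using kc unfolding k_connected_def by simp
  hence "card (V - ?N) \<ge> 2" using lt NV fV card_Diff_subset[of ?N V] by linarith
  moreover have "card ((V - ?N) - {v}) = card (V - ?N) - 1" using v vN fV by simp
  ultimately have "card ((V - ?N) - {v}) \<ge> 1" by linarith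
  then have "(V - ?N) - {v} \<noteq> {}" by (metis card.empty not_one_le_zero)
  then obtain w where w: "w \<in> V - ?N" "w \<noteq> v" by blast
  have "(v, w) \<in> {(x, y). x \<in> V - ?N \<and> y \<in> V - ?N \<and> adj E x y}\<^sup>*"
    using con w v vN unfolding connected_on_def by blast
  then show False
  proof (cases rule: converse_rtranclE)
    case base then show ?thesis using w by simp
  next
    case (step y)
    then have "adj E v y" "y \<notin> ?N" by auto
    then show ?thesis unfolding nbrs_def by simp
  qed
qed

lemma exists_min_occ: assumes g: "graph V E" shows "\<exists>X. min_odd_cycle_cover V E X"
proof -
  have occV: "odd_cycle_cover V E V"
    unfolding odd_cycle_cover_def bipartite_on_def independent_def by auto
  define n0 where "n0 = (LEAST n. \<exists>X. odd_cycle_cover V E X \<and> card X = n)"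
  have "\<exists>X. odd_cycle_cover V E X \<and> card X = n0"
    unfolding n0_def by (rule LeastI[of _ "card V"]) (use occV in blast)
  then obtain X where X: "odd_cycle_cover V E X" "card X = n0" by blast
  have "\<forall>Y. odd_cycle_cover V E Y \<longrightarrow> card X \<le> card Y"
    using X unfolding n0_def by (auto intro: Least_le)
  then show ?thesis using X unfolding min_odd_cycle_cover_def by blast
qed

lemma exists_nice: assumes g: "graph V E" shows "\<exists>A B. nice_partition V E A B"
proof -
  obtain X where X: "min_odd_cycle_cover V E X" using exists_min_occ[OF g] by blast
  then obtain P Q where PQ: "P \<union> Q = V - X" "P \<inter> Q = {}" "independent E P" "independent E Q"
    and XV: "X \<subseteq> V"
    unfolding min_odd_cycle_cover_def odd_cycle_cover_def bipartite_on_def by blast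
  define XA where "XA = {v\<in>X. card (nbrs E v \<inter> Q) > card (nbrs E v \<inter> P)}"
  define A where "A = P \<union> XA"
  define B where "B = Q \<union> (X - XA)"
  have AX: "A - X = P" using PQ unfolding A_def XA_def by blast
  have BX: "B - X = Q" using PQ unfolding B_def XA_def by blast
  have "partition2 V A B" unfolding partition2_def A_def B_def XA_def using PQ XV by blast
  moreover have "(\<forall>v\<in>X. card (nbrs E v \<inter> (B - X)) > card (nbrs E v \<inter> (A - X)) \<longrightarrow> v \<in> A)"
    unfolding AX BX unfolding A_def XA_def by auto
  moreover have "(\<forall>v\<in>X. card (nbrs E v \<inter> (A - X)) > card (nbrs E v \<inter> (B - X)) \<longrightarrow> v \<in> B)"
    unfolding AX BX unfolding B_def XA_def by auto
  ultimately show ?thesis unfolding nice_partition_def using X PQ AX BX by metis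
qed


lemma greedy:
  assumes "finite I"
    and ex: "\<And>F. finite F \<Longrightarrow> card F < N \<Longrightarrow> \<exists>e. P e \<and> card e = 2 \<and> e \<inter> F = {}"
  shows "finite F0 \<Longrightarrow> card F0 + 2 * card I \<le> N \<Longrightarrow>
     \<exists>m. (\<forall>i\<in>I. P (m i) \<and> m i \<inter> F0 = {}) \<and> (\<forall>i\<in>I. \<forall>j\<in>I. i \<noteq> j \<longrightarrow> m i \<inter> m j = {})"
  using assms(1)
proof (induction I arbitrary: F0 rule: finite_induct)
  case empty then show ?case by simp
next
  case (insert i I)
  have c: "card (insert i I) = card I + 1" using insert by simp
  then have "card F0 < N" using insert.prems by linarith
  then obtain e where e: "P e" "card e = 2" "e \<inter> F0 = {}" using ex insert.prems by blast
  have fe: "finite e" using e(2) by (metis card.infinite zero_neq_numeral)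
  have "card (F0 \<union> e) \<le> card F0 + 2" using card_Un_le[of F0 e] e(2) by simp
  then have "card (F0 \<union> e) + 2 * card I \<le> N" using insert.prems c by linarith
  then obtain m where m: "\<forall>i\<in>I. P (m i) \<and> m i \<inter> (F0 \<union> e) = {}"
     "\<forall>i\<in>I. \<forall>j\<in>I. i \<noteq> j \<longrightarrow> m i \<inter> m j = {}"
    using insert.IH[of "F0 \<union> e"] insert.prems fe by blast
  show ?case
    apply (rule exI[of _ "m(i := e)"])
    using m e insert.hyps by (auto simp: disjoint_iff)
qed

lemma pick_points:
  assumes "finite J"
  shows "finite F \<Longrightarrow> (\<forall>i\<in>J. finite (C i) \<and> card (C i) \<ge> card F + card J) \<Longrightarrow>
     \<exists>r. (\<forall>i\<in>J. r i \<in> C i \<and> r i \<notin> F) \<and> inj_on r J"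
  using assms
proof (induction J arbitrary: F rule: finite_induct)
  case empty then show ?case by simp
next
  case (insert i J)
  have c: "card (insert i J) = card J + 1" using insert by simp
  have ci: "finite (C i)" "card (C i) \<ge> card F + card J + 1" using insert.prems c by auto
  have "card (C i - F) \<ge> card (C i) - card F" using diff_card_le_card_Diff[OF insert.prems(1)] by simp
  then have "card (C i - F) > 0" using ci by linarith
  then have "C i - F \<noteq> {}" by (metis card.empty less_irrefl)
  then obtain x where x: "x \<in> C i" "x \<notin> F" by blast
  have "card (insert x F) \<le> card F + 1" using card_insert_le_m1 insert.prems(1)
    by (simp add: card_insert_if)
  then have "\<forall>j\<in>J. finite (C j) \<and> card (C j) \<ge> card (insert x F) + card J"
    using insert.prems c by fastforce
  then obtain r where r: "\<forall>j\<in>J. r j \<in> C j \<and> r j \<notin> insert x F" "inj_on r J"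
    using insert.IH[of "insert x F"] insert.prems by blast
  show ?case
    apply (rule exI[of _ "r(i := x)"])
    using r x insert.hyps by (auto simp: inj_on_def)
qed

lemma cover_lemma:
  assumes g: "graph V E" and X: "min_odd_cycle_cover V E X" and p: "partition2 V A B"
    and F: "finite F" "card F < card X"
  shows "\<exists>e\<in>E. (e \<subseteq> A \<or> e \<subseteq> B) \<and> e \<inter> F = {}"
proof (rule ccontr)
  assume na: "\<not> ?thesis"
  have indA: "independent E (A - F)" unfolding independent_def
  proof (intro ballI notI)
    fix u v assume uv: "u \<in> A - F" "v \<in> A - F" "adj E u v"
    then have "{u,v} \<in> E" "{u,v} \<subseteq> A" "{u,v} \<inter> F = {}" unfolding adj_def by auto
    then show False using na by blast
  qed
  have indB: "independent E (B - F)" unfolding independent_def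
  proof (intro ballI notI)
    fix u v assume uv: "u \<in> B - F" "v \<in> B - F" "adj E u v"
    then have "{u,v} \<in> E" "{u,v} \<subseteq> B" "{u,v} \<inter> F = {}" unfolding adj_def by auto
    then show False using na by blast
  qed
  have "odd_cycle_cover V E (F \<inter> V)"
    unfolding odd_cycle_cover_def bipartite_on_def
  proof (intro conjI)
    show "F \<inter> V \<subseteq> V" by blast
    have "(A - F) \<union> (B - F) = V - F \<inter> V" "(A - F) \<inter> (B - F) = {}"
      using p unfolding partition2_def by blast+
    then show "\<exists>P Q. P \<union> Q = V - F \<inter> V \<and> P \<inter> Q = {} \<and> independent E P \<and> independent E Q"
      using indA indB by blast
  qed
  then have "card X \<le> card (F \<inter> V)" using X unfolding min_odd_cycle_cover_def by blast
  moreover have "card (F \<inter> V) \<le> card F" using F by (simp add: card_mono)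
  ultimately show False using F by linarith
qed

lemma large_case:
  assumes g: "graph V E" and X: "min_odd_cycle_cover V E X" and p: "partition2 V A B"
    and I: "I \<subseteq> {1..k}"
    and big: "2 * k + 2 * card I \<le> card X"
  shows "has_pbm E k s t I A B"
proof -
  define T where "T = s ` {1..k} \<union> t ` {1..k}"
  have fT: "finite T" unfolding T_def by simp
  have cT: "card T \<le> 2 * k" unfolding T_def
    using card_Un_le[of "s ` {1..k}" "t ` {1..k}"] card_image_le[of "{1..k}" s]
      card_image_le[of "{1..k}" t] by simp
  have fI: "finite I" using I finite_subset by blast
  have "\<exists>m. (\<forall>i\<in>I. (m i \<in> E \<and> (m i \<subseteq> A \<or> m i \<subseteq> B)) \<and> m i \<inter> T = {}) \<and>
      (\<forall>i\<in>I. \<forall>j\<in>I. i \<noteq> j \<longrightarrow> m i \<inter> m j = {})"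
  proof (rule greedy[OF fI _ fT])
    fix F :: "'a set" assume "finite F" "card F < card X"
    then obtain e where "e \<in> E" "e \<subseteq> A \<or> e \<subseteq> B" "e \<inter> F = {}"
      using cover_lemma[OF g X p] by blast
    then show "\<exists>e. (e \<in> E \<and> (e \<subseteq> A \<or> e \<subseteq> B)) \<and> card e = 2 \<and> e \<inter> F = {}"
      using edge_props[OF g] by blast
  next
    show "card T + 2 * card I \<le> card X" using cT big by linarith
  qed
  then obtain m where m: "\<forall>i\<in>I. (m i \<in> E \<and> (m i \<subseteq> A \<or> m i \<subseteq> B)) \<and> m i \<inter> T = {}"
      "\<forall>i\<in>I. \<forall>j\<in>I. i \<noteq> j \<longrightarrow> m i \<inter> m j = {}" by blast
  have "parity_breaking_matching E k s t I A B m"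
    unfolding parity_breaking_matching_def
    using m unfolding T_def by blast
  then show ?thesis unfolding has_pbm_def by blast
qed

lemma align:
  assumes g: "graph V E" and n1: "nice_with V E A B X" and n2: "nice_with V E A' B' X'"
    and con: "connected_on E R" and R: "R \<subseteq> V - (X \<union> X')"
  shows "(\<forall>v\<in>R. v \<in> A \<longleftrightarrow> v \<in> A') \<or> (\<forall>v\<in>R. v \<in> A \<longleftrightarrow> v \<in> B')"
proof (cases "R = {}")
  case True then show ?thesis by simp
next
  case False
  then obtain r0 where r0: "r0 \<in> R" by blast
  have p1: "A \<union> B = V" "A \<inter> B = {}" and i1: "independent E (A - X)" "independent E (B - X)"
    using n1 unfolding nice_with_def partition2_def by auto
  have p2: "A' \<union> B' = V" "A' \<inter> B' = {}" and i2: "independent E (A' - X')" "independent E (B' - X')"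
    using n2 unfolding nice_with_def partition2_def by auto
  have edge: "(x \<in> A \<longleftrightarrow> x \<in> A') = (y \<in> A \<longleftrightarrow> y \<in> A')"
    if "x \<in> R" "y \<in> R" "adj E x y" for x y
  proof -
    have "x \<in> A \<longleftrightarrow> y \<notin> A"
      using that R p1 i1 unfolding independent_def by blast
    moreover have "x \<in> A' \<longleftrightarrow> y \<notin> A'"
      using that R p2 i2 unfolding independent_def by blast
    ultimately show ?thesis by blast
  qed
  have all: "(v \<in> A \<longleftrightarrow> v \<in> A') = (r0 \<in> A \<longleftrightarrow> r0 \<in> A')" if v: "v \<in> R" for v
  proof -
    have "(r0, v) \<in> {(x, y). x \<in> R \<and> y \<in> R \<and> adj E x y}\<^sup>*"
      using con r0 v unfolding connected_on_def by blast
    then show ?thesis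
    proof (induction rule: rtrancl_induct)
      case base then show ?case by simp
    next
      case (step y z) then show ?case using edge by auto
    qed
  qed
  show ?thesis
  proof (cases "r0 \<in> A \<longleftrightarrow> r0 \<in> A'")
    case True then show ?thesis using all by blast
  next
    case False
    have "\<forall>v\<in>R. v \<in> A \<longleftrightarrow> v \<in> B'"
    proof
      fix v assume v: "v \<in> R"
      then have "v \<in> V" using R by blast
      then show "v \<in> A \<longleftrightarrow> v \<in> B'" using all[OF v] False p2 by blast
    qed
    then show ?thesis by blast
  qed
qed


lemma side_lemma:
  assumes g: "graph V E" and p: "partition2 V A B" and indB: "independent E (B - X)"
    and nice1: "\<forall>v\<in>X. card (nbrs E v \<inter> (B - X)) > card (nbrs E v \<inter> (A - X)) \<longrightarrow> v \<in> A"
    and RX: "R \<subseteq> V - X" and cov: "V - X \<subseteq> R \<union> Y" and fY: "finite Y"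
    and v: "v \<in> V"
    and lt: "card (nbrs E v \<inter> R \<inter> A) + card Y < card (nbrs E v \<inter> R \<inter> B)"
  shows "v \<in> A"
proof (cases "v \<in> X")
  case True
  have fN: "finite (nbrs E v)" using nbrs_fin[OF g] by blast
  have "nbrs E v \<inter> R \<inter> B \<subseteq> nbrs E v \<inter> (B - X)" using RX by blast
  then have c1: "card (nbrs E v \<inter> R \<inter> B) \<le> card (nbrs E v \<inter> (B - X))"
    using fN by (simp add: card_mono)
  have "nbrs E v \<inter> (A - X) \<subseteq> (nbrs E v \<inter> R \<inter> A) \<union> Y" using cov p unfolding partition2_def by blast
  then have "card (nbrs E v \<inter> (A - X)) \<le> card ((nbrs E v \<inter> R \<inter> A) \<union> Y)"
    using fN fY by (simp add: card_mono)
  also have "\<dots> \<le> card (nbrs E v \<inter> R \<inter> A) + card Y" by (rule card_Un_le)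
  finally have c2: "card (nbrs E v \<inter> (A - X)) \<le> card (nbrs E v \<inter> R \<inter> A) + card Y" .
  show ?thesis using nice1 True c1 c2 lt by fastforce
next
  case False
  show ?thesis
  proof (rule ccontr)
    assume "v \<notin> A"
    then have vB: "v \<in> B - X" using v p False unfolding partition2_def by blast
    have "nbrs E v \<inter> R \<inter> B \<noteq> {}" using lt by (metis card.empty not_less0)
    then obtain w where w: "w \<in> nbrs E v" "w \<in> R" "w \<in> B" by blast
    then have "w \<in> B - X" "adj E v w" using RX unfolding nbrs_def by auto
    then show False using vB indB unfolding independent_def by blast
  qed
qed


lemma small_case:
  assumes g: "graph V E" and kc: "k_connected V E n"
    and n1: "nice_with V E A B X" and n2: "nice_with V E A' B' X'"
    and hR: "\<forall>v\<in>V - (X \<union> X'). v \<in> A \<longleftrightarrow> v \<in> A'"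
    and num1: "3 * card X + 2 * K < n" and num2: "2 * k + 3 * card I \<le> K"
    and I: "I \<subseteq> {1..k}"
    and pbm: "parity_breaking_matching E k s t I A B m"
  shows "has_pbm E k s t I A' B'"
proof -
  have fV: "finite V" using g unfolding graph_def by simp
  have fI: "finite I" using I finite_subset by blast
  have p1: "partition2 V A B" and X: "min_odd_cycle_cover V E X"
    and i1: "independent E (A - X)" "independent E (B - X)"
    and c1: "\<forall>v\<in>X. card (nbrs E v \<inter> (B - X)) > card (nbrs E v \<inter> (A - X)) \<longrightarrow> v \<in> A"
    and c1': "\<forall>v\<in>X. card (nbrs E v \<inter> (A - X)) > card (nbrs E v \<inter> (B - X)) \<longrightarrow> v \<in> B"
    using n1 unfolding nice_with_def by auto
  have p2: "partition2 V A' B'" and X': "min_odd_cycle_cover V E X'"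
    and i2: "independent E (A' - X')" "independent E (B' - X')"
    and c2: "\<forall>v\<in>X'. card (nbrs E v \<inter> (B' - X')) > card (nbrs E v \<inter> (A' - X')) \<longrightarrow> v \<in> A'"
    and c2': "\<forall>v\<in>X'. card (nbrs E v \<inter> (A' - X')) > card (nbrs E v \<inter> (B' - X')) \<longrightarrow> v \<in> B'"
    using n2 unfolding nice_with_def by auto
  have XV: "X \<subseteq> V" "X' \<subseteq> V" using X X' unfolding min_odd_cycle_cover_def odd_cycle_cover_def by auto
  have fX: "finite X" "finite X'" using XV fV finite_subset by auto
  have cXX: "card X' = card X" using X X' unfolding min_odd_cycle_cover_def
    by (meson le_antisym)
  define \<tau> where "\<tau> = card X"
  define R where "R = V - (X \<union> X')"
  define \<alpha> where "\<alpha> v = card (nbrs E v \<inter> R \<inter> A)" for v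
  define \<beta> where "\<beta> v = card (nbrs E v \<inter> R \<inter> B)" for v
  have RA': "nbrs E v \<inter> R \<inter> A' = nbrs E v \<inter> R \<inter> A" for v using hR unfolding R_def by blast
  have RB': "nbrs E v \<inter> R \<inter> B' = nbrs E v \<inter> R \<inter> B" for v
    using hR p1 p2 unfolding R_def partition2_def by blast
  have deg: "n \<le> \<alpha> v + \<beta> v + 2 * \<tau>" if v: "v \<in> V" for v
  proof -
    have fN: "finite (nbrs E v)" "nbrs E v \<subseteq> V" using nbrs_fin[OF g] by auto
    have "nbrs E v \<subseteq> ((nbrs E v \<inter> R \<inter> A) \<union> (nbrs E v \<inter> R \<inter> B)) \<union> (X \<union> X')"
      using fN(2) p1 unfolding R_def partition2_def by blast
    then have "card (nbrs E v) \<le> card (((nbrs E v \<inter> R \<inter> A) \<union> (nbrs E v \<inter> R \<inter> B)) \<union> (X \<union> X'))"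
      using fN fX by (simp add: card_mono)
    also have "\<dots> \<le> card ((nbrs E v \<inter> R \<inter> A) \<union> (nbrs E v \<inter> R \<inter> B)) + card (X \<union> X')"
      by (rule card_Un_le)
    also have "\<dots> \<le> \<alpha> v + \<beta> v + (card X + card X')"
      unfolding \<alpha>_def \<beta>_def using card_Un_le add_mono by blast
    finally show ?thesis using min_degree[OF g kc v] cXX unfolding \<tau>_def by linarith
  qed
  have sideA: "v \<in> A \<and> v \<in> A'" if v: "v \<in> V" and a: "\<alpha> v \<le> K" for v
  proof -
    have lt: "\<alpha> v + \<tau> < \<beta> v" using deg[OF v] a num1 unfolding \<tau>_def by linarith
    have "v \<in> A"
      by (rule side_lemma[OF g p1 i1(2) c1 _ _ fX(2) v])
        (use lt cXX in \<open>auto simp: R_def \<alpha>_def \<beta>_def \<tau>_def\<close>)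
    moreover have "v \<in> A'"
      by (rule side_lemma[OF g p2 i2(2) c2 _ _ fX(1) v, of R])
        (use lt cXX RA' RB' in \<open>auto simp: R_def \<alpha>_def \<beta>_def \<tau>_def\<close>)
    ultimately show ?thesis by blast
  qed
  have p1s: "partition2 V B A" using p1 unfolding partition2_def by blast
  have p2s: "partition2 V B' A'" using p2 unfolding partition2_def by blast
  have sideB: "v \<in> B \<and> v \<in> B'" if v: "v \<in> V" and a: "\<beta> v \<le> K" for v
  proof -
    have lt: "\<beta> v + \<tau> < \<alpha> v" using deg[OF v] a num1 unfolding \<tau>_def by linarith
    have "v \<in> B"
      by (rule side_lemma[OF g p1s i1(1) c1' _ _ fX(2) v])
        (use lt cXX in \<open>auto simp: R_def \<alpha>_def \<beta>_def \<tau>_def\<close>)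
    moreover have "v \<in> B'"
      by (rule side_lemma[OF g p2s i2(1) c2' _ _ fX(1) v, of R])
        (use lt cXX RA' RB' in \<open>auto simp: R_def \<alpha>_def \<beta>_def \<tau>_def\<close>)
    ultimately show ?thesis by blast
  qed
  have unb: "v \<in> A \<longleftrightarrow> v \<in> A'" if v: "v \<in> V" and u: "\<alpha> v \<le> K \<or> \<beta> v \<le> K" for v
    using sideA[OF v] sideB[OF v] u p1 p2 unfolding partition2_def by blast
  have m1: "\<forall>i\<in>I. m i \<in> E \<and> (m i \<subseteq> A \<or> m i \<subseteq> B)"
    and m2: "\<forall>i\<in>I. \<forall>j\<in>I. i \<noteq> j \<longrightarrow> m i \<inter> m j = {}"
    and m3: "\<forall>i\<in>I. \<forall>j\<in>{1..k}. j \<noteq> i \<longrightarrow> m i \<inter> {s j, t j} = {}"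
    using pbm unfolding parity_breaking_matching_def by auto
  have mV: "m i \<subseteq> V" "card (m i) = 2" "finite (m i)" if "i \<in> I" for i
    using edge_props[OF g] m1 that by auto
  define bal where "bal u \<longleftrightarrow> K < \<alpha> u \<and> K < \<beta> u" for u
  define J where "J = {i\<in>I. \<exists>u\<in>m i. bal u}"
  define u where "u i = (SOME x. x \<in> m i \<and> bal x)" for i
  have uJ: "u i \<in> m i \<and> bal (u i)" if "i \<in> J" for i
    using that unfolding J_def u_def by (metis (mono_tags, lifting) mem_Collect_eq someI_ex)
  define C where "C i = (if u i \<in> A' then nbrs E (u i) \<inter> R \<inter> A' else nbrs E (u i) \<inter> R \<inter> B')" for i
  define T where "T = s ` {1..k} \<union> t ` {1..k}"
  define F where "F = T \<union> (\<Union>i\<in>I. m i)"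
  have fT: "finite T" unfolding T_def by simp
  have cT: "card T \<le> 2 * k" unfolding T_def
    using card_Un_le[of "s ` {1..k}" "t ` {1..k}"] card_image_le[of "{1..k}" s]
      card_image_le[of "{1..k}" t] by simp
  have fF: "finite F" unfolding F_def using fT fI mV by auto
  have "card (\<Union>i\<in>I. m i) \<le> (\<Sum>i\<in>I. card (m i))" by (rule card_UN_le[OF fI])
  also have "\<dots> = 2 * card I" using mV by simp
  finally have cU: "card (\<Union>i\<in>I. m i) \<le> 2 * card I" .
  have cF: "card F \<le> 2 * k + 2 * card I" unfolding F_def
    using card_Un_le[of T "\<Union>i\<in>I. m i"] cT cU by linarith
  have JI: "J \<subseteq> I" unfolding J_def by blast
  have fJ: "finite J" using JI fI finite_subset by blast
  have cJ: "card J \<le> card I" using JI fI card_mono by blast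
  have Cprops: "finite (C i) \<and> card (C i) \<ge> card F + card J" if i: "i \<in> J" for i
  proof -
    have "finite (C i)" unfolding C_def using nbrs_fin[OF g] by auto
    moreover have "card (C i) > K" using uJ[OF i] RA' RB' unfolding C_def bal_def \<alpha>_def \<beta>_def by auto
    ultimately show ?thesis using cF cJ num2 by linarith
  qed
  obtain r where r: "\<forall>i\<in>J. r i \<in> C i \<and> r i \<notin> F" "inj_on r J"
    using pick_points[OF fJ fF] Cprops by blast
  define m' where "m' i = (if i \<in> J then {u i, r i} else m i)" for i
  have uV: "u i \<in> V" if "i \<in> J" for i using uJ[OF that] mV JI that by blast
  have new1: "m' i \<in> E \<and> (m' i \<subseteq> A' \<or> m' i \<subseteq> B')" if i: "i \<in> I" for i
  proof (cases "i \<in> J")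
    case True
    have "r i \<in> nbrs E (u i)" "r i \<in> R" using r(1) True unfolding C_def by (auto split: if_splits)
    then have e: "{u i, r i} \<in> E" unfolding nbrs_def adj_def by simp
    have "u i \<in> A' \<longrightarrow> r i \<in> A'" "u i \<notin> A' \<longrightarrow> r i \<in> B'" using r(1) True unfolding C_def by auto
    moreover have "u i \<notin> A' \<longrightarrow> u i \<in> B'" using uV[OF True] p2 unfolding partition2_def by blast
    ultimately show ?thesis using e True unfolding m'_def by auto
  next
    case False
    then have allu: "\<forall>x\<in>m i. \<alpha> x \<le> K \<or> \<beta> x \<le> K" using i unfolding J_def bal_def by auto
    have eq: "\<forall>x\<in>m i. x \<in> A \<longleftrightarrow> x \<in> A'" using allu unb mV[OF i] by blast
    have "m i \<subseteq> A \<longrightarrow> m i \<subseteq> A'" using eq by blast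
    moreover have "m i \<subseteq> B \<longrightarrow> m i \<subseteq> B'" using eq mV[OF i] p1 p2 unfolding partition2_def by blast
    ultimately show ?thesis using m1 i False unfolding m'_def by auto
  qed
  have sub: "m' i \<subseteq> m i \<union> (if i \<in> J then {r i} else {})" if "i \<in> I" for i
    using uJ unfolding m'_def by auto
  have rF: "r i \<notin> m j" "r i \<notin> T" if "i \<in> J" "j \<in> I" for i j
    using r(1) that unfolding F_def by auto
  have new2: "m' i \<inter> m' j = {}" if "i \<in> I" "j \<in> I" "i \<noteq> j" for i j
  proof -
    have "m' i \<inter> m' j \<subseteq> (m i \<union> (if i \<in> J then {r i} else {})) \<inter> (m j \<union> (if j \<in> J then {r j} else {}))"
      using sub that by blast
    also have "\<dots> = {}"
      using m2 that rF r(2) unfolding inj_on_def by auto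
    finally show ?thesis by blast
  qed
  have new3: "m' i \<inter> {s j, t j} = {}" if "i \<in> I" "j \<in> {1..k}" "j \<noteq> i" for i j
  proof -
    have "s j \<in> T" "t j \<in> T" using that unfolding T_def by auto
    moreover have "s j \<notin> m i" "t j \<notin> m i" using m3 that by auto
    moreover have "i \<in> J \<Longrightarrow> r i \<notin> T" using rF that(1) by blast
    ultimately show ?thesis using sub[OF that(1)] by (cases "i \<in> J") auto
  qed
  have "parity_breaking_matching E k s t I A' B' m'"
    unfolding parity_breaking_matching_def using new1 new2 new3 by blast
  then show ?thesis unfolding has_pbm_def by blast
qed


theorem corollary5:
  fixes V :: "'a set" and E :: "'a set set" and k :: nat and I :: "nat set"
    and s t :: "nat \<Rightarrow> 'a"
  assumes "graph V E"
    and "k \<ge> 1"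
    and "I \<subseteq> {1..k}"
    and "k_connected V E (26 * k + 24 * card I)"
    and "s ` {1..k} \<subseteq> V" and "t ` {1..k} \<subseteq> V"
    and "inj_on s {1..k}" and "inj_on t {1..k}"
    and "s ` {1..k} \<inter> t ` {1..k} = {}"
  shows "(\<exists>A B. nice_partition V E A B \<and> has_pbm E k s t I A B) \<longleftrightarrow>
         (\<forall>A B. nice_partition V E A B \<longrightarrow> has_pbm E k s t I A B)"
proof
  assume "\<forall>A B. nice_partition V E A B \<longrightarrow> has_pbm E k s t I A B"
  then show "\<exists>A B. nice_partition V E A B \<and> has_pbm E k s t I A B"
    using exists_nice[OF assms(1)] by blast
next
  assume "\<exists>A B. nice_partition V E A B \<and> has_pbm E k s t I A B"
  then obtain A0 B0 m where n0: "nice_partition V E A0 B0"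
      and pm: "parity_breaking_matching E k s t I A0 B0 m"
    unfolding has_pbm_def by blast
  obtain X0 where nx0: "nice_with V E A0 B0 X0" using n0 nice_iff by blast
  show "\<forall>A B. nice_partition V E A B \<longrightarrow> has_pbm E k s t I A B"
  proof (intro allI impI)
    fix A B assume "nice_partition V E A B"
    then obtain X where nx: "nice_with V E A B X" using nice_iff by blast
    have X: "min_odd_cycle_cover V E X" and X0: "min_odd_cycle_cover V E X0"
      and p: "partition2 V A B"
      using nx nx0 unfolding nice_with_def by auto
    show "has_pbm E k s t I A B"
    proof (cases "2 * k + 2 * card I \<le> card X")
      case True
      then show ?thesis using large_case[OF assms(1) X p assms(3)] by blast
    next
      case False
      have XV: "X \<subseteq> V" "X0 \<subseteq> V" using X X0 unfolding min_odd_cycle_cover_def odd_cycle_cover_def by auto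
      have cXX: "card X0 = card X" using X X0 unfolding min_odd_cycle_cover_def
        by (meson le_antisym)
      define R where "R = V - (X0 \<union> X)"
      have "card (X0 \<union> X) \<le> card X0 + card X" by (rule card_Un_le)
      then have "card (X0 \<union> X) < 26 * k + 24 * card I" using False cXX by linarith
      moreover have "\<forall>Y. Y \<subseteq> V \<and> card Y < 26 * k + 24 * card I \<longrightarrow> connected_on E (V - Y)"
        using assms(4) unfolding k_connected_def by (rule conjunct2)
      ultimately have con: "connected_on E R" using XV unfolding R_def by simp
      have num1: "3 * card X0 + 2 * (2 * k + 3 * card I) < 26 * k + 24 * card I"
        using False cXX by arith
      have al: "(\<forall>v\<in>R. v \<in> A0 \<longleftrightarrow> v \<in> A) \<or> (\<forall>v\<in>R. v \<in> A0 \<longleftrightarrow> v \<in> B)"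
        by (rule align[OF assms(1) nx0 nx con]) (simp add: R_def)
      then show ?thesis
      proof
        assume "\<forall>v\<in>R. v \<in> A0 \<longleftrightarrow> v \<in> A"
        then show ?thesis
          using small_case[OF assms(1) assms(4) nx0 nx _ num1 _ assms(3) pm] unfolding R_def by blast
      next
        assume "\<forall>v\<in>R. v \<in> A0 \<longleftrightarrow> v \<in> B"
        then have "has_pbm E k s t I B A"
          using small_case[OF assms(1) assms(4) nx0 nice_with_swap[OF nx] _ num1 _ assms(3) pm]
          unfolding R_def by blast
        then show ?thesis by (rule pbm_swap)
      qed
    qed
  qed
qed

end
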